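(* Let $(W,S)$ be a Coxeter system with $S$ finite and let $D_1,\dots,D_m$ be non-empty subsets of $W$ such that the multiplication map $D_1\times\cdots\times D_m\to W$ is a bijection and $D_1(u)\cdots D_m(u)=W(u)$. Then for every representation $\rho$ of the Hecke algebra $H_q(W,S)$, $$W(\rho,u)=D_1(\rho,u)\cdots D_m(\rho,u)\quad\text{in }\mathrm{End}(V_\rho)[[u]].$$
   Context: $\ell$ is the length function of $(W,S)$. For $D\subseteq W$, $D(u)=\sum_{w\in D}u^{\ell(w)}$. The Hecke algebra $H_q(W,S)$ (over a field $k$, with parameter $q$) is the associative algebra with basis $\{e_w\}_{w\in W}$ whose multiplication is characterized by $(e_s+1)(e_s-q)=0$ for $s\in S$ and $e_we_v=e_{wv}$ whenever $\ell(wv)=\ell(w)+\ell(v)$. For a representation $(\rho,V_\rho)$ of $H_q(W,S)$ and $D\subseteq W$, the twisted Poincaré series is $D(\rho,u)=\sum_{w\in D}\rho(e_w)u^{\ell(w)}\in\mathrm{End}(V_\rho)[[u]]$. *)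

theory Defs
  imports Main "HOL-Algebra.Multiplicative_Group" "HOL-Algebra.Generated_Groups"
    "HOL-Computational_Algebra.Formal_Power_Series"
begin

definition word_prod :: "('a, 'b) monoid_scheme \<Rightarrow> 'a list \<Rightarrow> 'a" where
  "word_prod G ws = foldr (\<lambda>x y. x \<otimes>\<^bsub>G\<^esub> y) ws \<one>\<^bsub>G\<^esub>"

fun alt_word :: "'a \<Rightarrow> 'a \<Rightarrow> nat \<Rightarrow> 'a list" where
  "alt_word s t 0 = []"
| "alt_word s t (Suc n) = s # alt_word t s n"

text \<open>Defining relations of the Coxeter presentation (as a monoid presentation):
  s s = 1 and the braid relations (s t s ...)_m = (t s t ...)_m with m = m(s,t) the
  order of s t (only when finite).\<close>
definition coxeter_relators :: "('a, 'b) monoid_scheme \<Rightarrow> 'a set \<Rightarrow> ('a list \<times> 'a list) set" where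
  "coxeter_relators G S =
     {([s, s], []) | s. s \<in> S} \<union>
     {(alt_word s t (group.ord G (s \<otimes>\<^bsub>G\<^esub> t)), alt_word t s (group.ord G (s \<otimes>\<^bsub>G\<^esub> t))) | s t.
         s \<in> S \<and> t \<in> S \<and> s \<noteq> t \<and> group.ord G (s \<otimes>\<^bsub>G\<^esub> t) \<noteq> 0}"

definition coxeter_step :: "('a, 'b) monoid_scheme \<Rightarrow> 'a set \<Rightarrow> ('a list \<times> 'a list) set" where
  "coxeter_step G S =
     {(u @ l @ v, u @ r @ v) | u v l r.
        (l, r) \<in> coxeter_relators G S \<or> (r, l) \<in> coxeter_relators G S}"

text \<open>(W,S) is a Coxeter system: W is a group generated by the involutions S, with
  presentation  < S | s^2 = 1, (st)^{m(s,t)} = 1 >  where m(s,t) is the order of st.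
  The presentation condition says: any two words over S with the same product in W are
  equal in the presented monoid (= group), i.e. related by the congruence generated by
  the defining relations.\<close>
definition coxeter_system :: "('a, 'b) monoid_scheme \<Rightarrow> 'a set \<Rightarrow> bool" where
  "coxeter_system G S \<longleftrightarrow>
     group G \<and> S \<subseteq> carrier G \<and> \<one>\<^bsub>G\<^esub> \<notin> S \<and>
     (\<forall>s\<in>S. s \<otimes>\<^bsub>G\<^esub> s = \<one>\<^bsub>G\<^esub>) \<and>
     generate G S = carrier G \<and>
     (\<forall>ws vs. set ws \<subseteq> S \<longrightarrow> set vs \<subseteq> S \<longrightarrow> word_prod G ws = word_prod G vs \<longrightarrow>
        (ws, vs) \<in> (coxeter_step G S)\<^sup>*)"

definition coxeter_length :: "('a, 'b) monoid_scheme \<Rightarrow> 'a set \<Rightarrow> 'a \<Rightarrow> nat" where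
  "coxeter_length G S w = (LEAST n. \<exists>ws. set ws \<subseteq> S \<and> length ws = n \<and> word_prod G ws = w)"

definition poincare_series :: "('a, 'b) monoid_scheme \<Rightarrow> 'a set \<Rightarrow> 'a set \<Rightarrow> int fps" where
  "poincare_series G S D = Abs_fps (\<lambda>n. int (card {w \<in> D. coxeter_length G S w = n}))"

text \<open>A representation of H_q(W,S) on the k-vector space V (scalar multiplication scale),
  given by rho w = rho(e_w).  Since H_q has basis (e_w) and its multiplication is
  determined by e_1 = 1, (e_s+1)(e_s-q)=0 and e_w e_v = e_{wv} for l(wv)=l(w)+l(v),
  a unital algebra homomorphism H_q \<rightarrow> End(V) is the same as such a family.\<close>
definition hecke_rep ::
  "('a, 'b) monoid_scheme \<Rightarrow> 'a set \<Rightarrow> ('k::field \<Rightarrow> 'v::ab_group_add \<Rightarrow> 'v) \<Rightarrow> 'k \<Rightarrow> ('a \<Rightarrow> 'v \<Rightarrow> 'v) \<Rightarrow> bool" where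
  "hecke_rep G S scale q \<rho> \<longleftrightarrow>
     vector_space scale \<and>
     (\<forall>w\<in>carrier G. Vector_Spaces.linear scale scale (\<rho> w)) \<and>
     \<rho> \<one>\<^bsub>G\<^esub> = id \<and>
     (\<forall>s\<in>S. \<forall>x. \<rho> s (\<rho> s x - scale q x) + (\<rho> s x - scale q x) = 0) \<and>
     (\<forall>w\<in>carrier G. \<forall>v\<in>carrier G.
        coxeter_length G S (w \<otimes>\<^bsub>G\<^esub> v) = coxeter_length G S w + coxeter_length G S v \<longrightarrow>
        \<rho> (w \<otimes>\<^bsub>G\<^esub> v) = \<rho> w \<circ> \<rho> v)"

text \<open>Formal power series with coefficients in End(V): the coefficient of u^n.
  Multiplication is the Cauchy product with composition of endomorphisms.\<close>
type_synonym 'v end_series = "nat \<Rightarrow> 'v \<Rightarrow> 'v"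

definition end_series_one :: "'v::ab_group_add end_series" where
  "end_series_one = (\<lambda>n. if n = 0 then id else (\<lambda>x. 0))"

definition end_series_mult :: "'v::ab_group_add end_series \<Rightarrow> 'v end_series \<Rightarrow> 'v end_series" where
  "end_series_mult f g = (\<lambda>n x. \<Sum>i\<le>n. f i (g (n - i) x))"

definition twisted_poincare ::
  "('a, 'b) monoid_scheme \<Rightarrow> 'a set \<Rightarrow> ('a \<Rightarrow> 'v \<Rightarrow> 'v) \<Rightarrow> 'a set \<Rightarrow> 'v::ab_group_add end_series" where
  "twisted_poincare G S \<rho> D = (\<lambda>n x. \<Sum>w\<in>{w \<in> D. coxeter_length G S w = n}. \<rho> w x)"

end

theory Submission
  imports Defs
begin

lemma additive_sum:
  fixes f :: "'v::ab_group_add \<Rightarrow> 'w::ab_group_add"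
  assumes "\<forall>x y. f (x + y) = f x + f y"
  shows "f (\<Sum>i\<in>I. g i) = (\<Sum>i\<in>I. f (g i))"
proof -
  have z: "f 0 = 0" using assms by (metis add_cancel_right_right add_0)
  show ?thesis
  proof (induction I rule: infinite_finite_induct)
    case (infinite A) then show ?case by (simp add: z)
  next
    case empty then show ?case by (simp add: z)
  next
    case (insert x F) then show ?case by (simp add: assms)
  qed
qed

lemma finite_listset_le:
  fixes L :: "'a \<Rightarrow> nat"
  assumes "\<forall>D\<in>set Ds. \<forall>n. finite {w\<in>D. L w \<le> n}"
  shows "finite {t\<in>listset Ds. sum_list (map L t) \<le> n}"
  using assms
proof (induction Ds arbitrary: n)
  case Nil then show ?case by simp
next
  case (Cons D Ds)
  have "{t\<in>listset (D#Ds). sum_list (map L t) \<le> n} \<subseteq>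
        (\<lambda>(w,t). w#t) ` ({w\<in>D. L w \<le> n} \<times> {t\<in>listset Ds. sum_list (map L t) \<le> n})"
    by (auto simp: set_Cons_def)
  moreover have "finite ({w\<in>D. L w \<le> n} \<times> {t\<in>listset Ds. sum_list (map L t) \<le> n})"
    using Cons by auto
  ultimately show ?case by (meson finite_imageI finite_subset)
qed

lemma series_expand:
  fixes h :: "'a \<Rightarrow> 'v::ab_group_add \<Rightarrow> 'v" and L :: "'a \<Rightarrow> nat"
  assumes "\<forall>D\<in>set Ds. \<forall>w\<in>D. \<forall>x y. h w (x+y) = h w x + h w y"
    and "\<forall>D\<in>set Ds. \<forall>n. finite {w\<in>D. L w \<le> n}"
  shows "foldr end_series_mult (map (\<lambda>D n x. \<Sum>w\<in>{w\<in>D. L w = n}. h w x) Ds) end_series_one n x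
       = (\<Sum>t\<in>{t\<in>listset Ds. sum_list (map L t) = n}. foldr h t x)"
  using assms
proof (induction Ds arbitrary: n x)
  case Nil
  have "{t\<in>listset []. sum_list (map L t) = n} = (if n = 0 then {[]} else {})" by auto
  then show ?case by (simp add: end_series_one_def)
next
  case (Cons D Ds)
  define T where "T k = {t\<in>listset Ds. sum_list (map L t) = k}" for k
  have finT: "finite (T k)" for k
  proof -
    have "T k \<subseteq> {t\<in>listset Ds. sum_list (map L t) \<le> k}" unfolding T_def by auto
    then show ?thesis using finite_listset_le[of Ds L k] Cons.prems by (meson finite_subset list.set_intros(2))
  qed
  have finD: "finite {w\<in>D. L w \<le> n}" using Cons.prems by auto
  have IH: "foldr end_series_mult (map (\<lambda>D n x. \<Sum>w\<in>{w\<in>D. L w = n}. h w x) Ds) end_series_one k y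
       = (\<Sum>t\<in>T k. foldr h t y)" for k y
    unfolding T_def using Cons by auto
  have "foldr end_series_mult (map (\<lambda>D n x. \<Sum>w\<in>{w\<in>D. L w = n}. h w x) (D#Ds)) end_series_one n x
      = (\<Sum>i\<le>n. \<Sum>w\<in>{w\<in>D. L w = i}. h w (\<Sum>t\<in>T (n-i). foldr h t x))"
    by (simp add: end_series_mult_def IH)
  also have "\<dots> = (\<Sum>i\<le>n. \<Sum>w\<in>{w\<in>{w\<in>D. L w \<le> n}. L w = i}. \<Sum>t\<in>T (n - L w). h w (foldr h t x))"
  proof (rule sum.cong[OF refl], rule sum.cong)
    fix i w assume "i \<in> {..n}" "w \<in> {w\<in>{w\<in>D. L w \<le> n}. L w = i}"
    then have "w \<in> D" "L w = i" by auto
    then show "h w (\<Sum>t\<in>T (n-i). foldr h t x) = (\<Sum>t\<in>T (n - L w). h w (foldr h t x))"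
      using Cons.prems(1) by (simp add: additive_sum)
  qed auto
  also have "\<dots> = (\<Sum>w\<in>{w\<in>D. L w \<le> n}. \<Sum>t\<in>T (n - L w). h w (foldr h t x))"
    by (rule sum.group) (use finD in auto)
  also have "\<dots> = (\<Sum>(w,t)\<in>(SIGMA w:{w\<in>D. L w \<le> n}. T (n - L w)). h w (foldr h t x))"
    by (rule sum.Sigma) (use finD finT in auto)
  also have "\<dots> = (\<Sum>z\<in>(SIGMA w:{w\<in>D. L w \<le> n}. T (n - L w)). foldr h ((\<lambda>(w,t). w#t) z) x)"
    by (rule sum.cong) auto
  also have "\<dots> = (\<Sum>t\<in>{t\<in>listset (D#Ds). sum_list (map L t) = n}. foldr h t x)"
  proof (rule sum.reindex_bij_betw)
    show "bij_betw (\<lambda>(w,t). w#t) (SIGMA w:{w\<in>D. L w \<le> n}. T (n - L w))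
           {t\<in>listset (D#Ds). sum_list (map L t) = n}"
      unfolding bij_betw_def
    proof
      show "inj_on (\<lambda>(w,t). w#t) (SIGMA w:{w\<in>D. L w \<le> n}. T (n - L w))"
        by (auto simp: inj_on_def)
      show "(\<lambda>(w,t). w#t) ` (SIGMA w:{w\<in>D. L w \<le> n}. T (n - L w)) =
           {t\<in>listset (D#Ds). sum_list (map L t) = n}"
      proof (intro equalityI subsetI)
        fix z assume "z \<in> (\<lambda>(w,t). w#t) ` (SIGMA w:{w\<in>D. L w \<le> n}. T (n - L w))"
        then show "z \<in> {t\<in>listset (D#Ds). sum_list (map L t) = n}"
          by (auto simp: T_def set_Cons_def)
      next
        fix z assume "z \<in> {t\<in>listset (D#Ds). sum_list (map L t) = n}"
        then obtain w t where "z = w#t" "w \<in> D" "t \<in> listset Ds" "L w + sum_list (map L t) = n"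
          by (auto simp: set_Cons_def)
        then show "z \<in> (\<lambda>(w,t). w#t) ` (SIGMA w:{w\<in>D. L w \<le> n}. T (n - L w))"
          by (auto simp: T_def image_iff intro!: bexI[where x="(w,t)"])
      qed
    qed
  qed
  finally show ?case .
qed

lemma fps_expand:
  fixes P :: "'a set \<Rightarrow> int fps"
  shows "fps_nth (prod_list (map P Ds)) n * x
       = foldr end_series_mult (map (\<lambda>D n x. fps_nth (P D) n * x) Ds) end_series_one n x"
proof (induction Ds arbitrary: n x)
  case Nil then show ?case by (simp add: end_series_one_def)
next
  case (Cons D Ds)
  have "fps_nth (prod_list (map P (D#Ds))) n * x = (\<Sum>i=0..n. fps_nth (P D) i * fps_nth (prod_list (map P Ds)) (n-i)) * x"
    by (simp add: fps_mult_nth)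
  also have "\<dots> = (\<Sum>i\<le>n. fps_nth (P D) i * (fps_nth (prod_list (map P Ds)) (n-i) * x))"
    by (simp add: sum_distrib_right atLeast0AtMost mult.assoc)
  finally show ?case by (simp add: end_series_mult_def Cons.IH)
qed


lemma word_prod_Cons: "word_prod G (x#xs) = x \<otimes>\<^bsub>G\<^esub> word_prod G xs"
  by (simp add: word_prod_def)

lemma word_prod_Nil: "word_prod G [] = \<one>\<^bsub>G\<^esub>"
  by (simp add: word_prod_def)

lemma word_prod_closed: "monoid G \<Longrightarrow> set ws \<subseteq> carrier G \<Longrightarrow> word_prod G ws \<in> carrier G"
  by (induction ws) (auto simp: word_prod_Cons word_prod_Nil monoid.m_closed)

lemma word_prod_append:
  assumes "monoid G" "set ws \<subseteq> carrier G" "set vs \<subseteq> carrier G"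
  shows "word_prod G (ws @ vs) = word_prod G ws \<otimes>\<^bsub>G\<^esub> word_prod G vs"
  using assms
  by (induction ws) (auto simp: word_prod_Cons word_prod_Nil monoid.m_assoc word_prod_closed)

context
  fixes G :: "('a, 'b) monoid_scheme" and S :: "'a set"
  assumes cox: "coxeter_system G S"
begin

lemma grp: "group G" using cox by (simp add: coxeter_system_def)
lemma mon: "monoid G" using grp by (simp add: group.is_monoid)
lemma SC: "S \<subseteq> carrier G" using cox by (simp add: coxeter_system_def)

lemma exists_word:
  assumes "w \<in> carrier G"
  shows "\<exists>ws. set ws \<subseteq> S \<and> word_prod G ws = w"
proof -
  have "w \<in> generate G S" using cox assms by (simp add: coxeter_system_def)
  then show ?thesis
  proof (induction rule: generate.induct)
    case one then show ?case by (auto intro!: exI[of _ "[]"] simp: word_prod_Nil)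
  next
    case (incl h) then show ?case
      using SC mon by (auto intro!: exI[of _ "[h]"] simp: word_prod_Cons word_prod_Nil)
  next
    case (inv h)
    have "h \<in> carrier G" "h \<otimes>\<^bsub>G\<^esub> h = \<one>\<^bsub>G\<^esub>" using inv SC cox by (auto simp: coxeter_system_def)
    then have "inv\<^bsub>G\<^esub> h = h" using grp by (simp add: group.inv_equality)
    then show ?case
      using inv SC mon by (auto intro!: exI[of _ "[h]"] simp: word_prod_Cons word_prod_Nil)
  next
    case (eng h1 h2)
    then obtain ws vs where "set ws \<subseteq> S" "word_prod G ws = h1" "set vs \<subseteq> S" "word_prod G vs = h2"
      by blast
    then show ?case using SC mon
      by (auto intro!: exI[of _ "ws @ vs"] simp: word_prod_append)
  qed
qed

abbreviation "len \<equiv> coxeter_length G S"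

lemma len_word:
  assumes "w \<in> carrier G"
  shows "\<exists>ws. set ws \<subseteq> S \<and> length ws = len w \<and> word_prod G ws = w"
proof -
  obtain ws where "set ws \<subseteq> S \<and> word_prod G ws = w" using exists_word assms by blast
  then have "\<exists>n ws. set ws \<subseteq> S \<and> length ws = n \<and> word_prod G ws = w" by blast
  then show ?thesis unfolding coxeter_length_def by (rule LeastI_ex)
qed

lemma len_le:
  assumes "set ws \<subseteq> S" "word_prod G ws = w"
  shows "len w \<le> length ws"
  unfolding coxeter_length_def using assms by (intro Least_le) blast

lemma len_mult:
  assumes "w \<in> carrier G" "v \<in> carrier G"
  shows "len (w \<otimes>\<^bsub>G\<^esub> v) \<le> len w + len v"
proof -
  obtain ws vs where "set ws \<subseteq> S" "length ws = len w" "word_prod G ws = w"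
    "set vs \<subseteq> S" "length vs = len v" "word_prod G vs = v"
    using len_word assms by meson
  then show ?thesis using len_le[of "ws@vs"] SC mon by (auto simp: word_prod_append)
qed

lemma len_one: "len \<one>\<^bsub>G\<^esub> = 0"
  using len_le[of "[]"] by (simp add: word_prod_Nil)

lemma finite_len_le:
  assumes "finite S"
  shows "finite {w\<in>carrier G. len w \<le> n}"
proof -
  have "{w\<in>carrier G. len w \<le> n} \<subseteq> word_prod G ` {ws. set ws \<subseteq> S \<and> length ws \<le> n}"
  proof
    fix w assume "w \<in> {w\<in>carrier G. len w \<le> n}"
    then obtain ws where "set ws \<subseteq> S" "length ws = len w" "word_prod G ws = w" "len w \<le> n"
      using len_word by blast
    then show "w \<in> word_prod G ` {ws. set ws \<subseteq> S \<and> length ws \<le> n}" by auto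
  qed
  then show ?thesis using finite_lists_length_le[OF assms] by (meson finite_imageI finite_subset)
qed

lemma len_prod_le:
  assumes "set t \<subseteq> carrier G"
  shows "len (word_prod G t) \<le> sum_list (map len t)"
  using assms
proof (induction t)
  case Nil then show ?case by (simp add: word_prod_Nil len_one)
next
  case (Cons w t)
  then have "len (word_prod G (w#t)) \<le> len w + len (word_prod G t)"
    using len_mult[of w "word_prod G t"] word_prod_closed[OF mon, of t] Cons.prems by (simp add: word_prod_Cons)
  then show ?case using Cons by simp
qed

lemma rho_prod:
  assumes "hecke_rep G S scale q \<rho>" "set t \<subseteq> carrier G"
    "len (word_prod G t) = sum_list (map len t)"
  shows "\<rho> (word_prod G t) = foldr \<rho> t"
  using assms(2,3)
proof (induction t)
  case Nil then show ?case using assms(1) by (simp add: word_prod_Nil hecke_rep_def)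
next
  case (Cons w t)
  have wc: "w \<in> carrier G" and tc: "set t \<subseteq> carrier G" using Cons.prems by auto
  have pc: "word_prod G t \<in> carrier G" using tc mon word_prod_closed by blast
  have a: "len (word_prod G t) \<le> sum_list (map len t)" using len_prod_le tc .
  have b: "len (w \<otimes>\<^bsub>G\<^esub> word_prod G t) \<le> len w + len (word_prod G t)" using len_mult wc pc .
  have c: "len (w \<otimes>\<^bsub>G\<^esub> word_prod G t) = len w + sum_list (map len t)"
    using Cons.prems(2) by (simp add: word_prod_Cons)
  have e1: "len (word_prod G t) = sum_list (map len t)" using a b c by linarith
  have e2: "len (w \<otimes>\<^bsub>G\<^esub> word_prod G t) = len w + len (word_prod G t)" using a b c by linarith
  have "\<rho> (w \<otimes>\<^bsub>G\<^esub> word_prod G t) = \<rho> w \<circ> \<rho> (word_prod G t)"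
    using assms(1) wc pc e2 unfolding hecke_rep_def by blast
  then show ?case using Cons.IH[OF tc e1] by (simp add: word_prod_Cons o_def)
qed

end


lemma foldr_triv: "foldr (\<lambda>w x. x) t y = y"
  by (induction t) auto

theorem mainTheorem5:
  fixes G :: "('a, 'b) monoid_scheme" and S :: "'a set"
    and Ds :: "'a set list"
    and scale :: "'k::field \<Rightarrow> 'v::ab_group_add \<Rightarrow> 'v" and q :: 'k
    and \<rho> :: "'a \<Rightarrow> 'v \<Rightarrow> 'v"
  assumes "coxeter_system G S"
    and "finite S"
    and "\<forall>D\<in>set Ds. D \<subseteq> carrier G \<and> D \<noteq> {}"
    and "bij_betw (word_prod G) (listset Ds) (carrier G)"
    and "prod_list (map (poincare_series G S) Ds) = poincare_series G S (carrier G)"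
    and "hecke_rep G S scale q \<rho>"
  shows "twisted_poincare G S \<rho> (carrier G) =
         foldr end_series_mult (map (twisted_poincare G S \<rho>) Ds) end_series_one"
proof -
  note cox = assms(1)
  define C where "C = carrier G"
  define A where "A = listset Ds"
  define L where "L = coxeter_length G S"
  define F where "F t = sum_list (map L t)" for t
  define g where "g t = L (word_prod G t)" for t
  have bij: "bij_betw (word_prod G) A C" using assms(4) by (simp add: A_def C_def)
  have Asub: "set t \<subseteq> C" if "t \<in> A" for t
  proof -
    have "\<forall>t\<in>listset Ds. set t \<subseteq> C" using assms(3)
      by (induction Ds) (simp, fastforce simp: set_Cons_def C_def)
    then show ?thesis using that A_def by blast
  qed
  have gF: "g t \<le> F t" if "t \<in> A" for t
    using len_prod_le[OF cox Asub[OF that, unfolded C_def]] by (simp add: g_def F_def L_def)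
  have finC: "finite {w\<in>C. L w \<le> n}" for n
    using finite_len_le[OF cox assms(2)] by (simp add: C_def L_def)
  have finDs: "\<forall>D\<in>set Ds. \<forall>n. finite {w\<in>D. L w \<le> n}"
  proof (intro ballI allI)
    fix D n assume "D \<in> set Ds"
    then have "{w\<in>D. L w \<le> n} \<subseteq> {w\<in>C. L w \<le> n}" using assms(3) C_def by auto
    then show "finite {w\<in>D. L w \<le> n}" using finC finite_subset by blast
  qed
  have inj: "inj_on (word_prod G) A" using bij by (simp add: bij_betw_def)
  have imgg: "word_prod G ` {t\<in>A. g t = n} = {w\<in>C. L w = n}" for n
    using bij unfolding bij_betw_def g_def by auto
  have fing: "finite {t\<in>A. g t = n}" for n
  proof -
    have "finite {w\<in>C. L w = n}" using finC[of n] by (rule finite_subset[rotated]) auto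
    moreover have "inj_on (word_prod G) {t\<in>A. g t = n}" using inj by (rule inj_on_subset) auto
    ultimately show ?thesis using imgg[of n] by (metis finite_imageD)
  qed
  have cardg: "card {t\<in>A. g t = n} = card {w\<in>C. L w = n}" for n
  proof -
    have "inj_on (word_prod G) {t\<in>A. g t = n}" using inj by (rule inj_on_subset) auto
    then show ?thesis using imgg[of n] card_image by metis
  qed
  have ps: "fps_nth (poincare_series G S D) n = int (card {w\<in>D. L w = n})" for D n
    by (simp add: poincare_series_def L_def)
  have cardF: "card {t\<in>A. F t = n} = card {w\<in>C. L w = n}" for n
  proof -
    have "int (card {t\<in>A. F t = n}) = (\<Sum>t\<in>{t\<in>listset Ds. sum_list (map L t) = n}. foldr (\<lambda>w x. x) t (1::int))"
      by (simp add: A_def F_def foldr_triv)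
    also have "\<dots> = foldr end_series_mult (map (\<lambda>D n x. \<Sum>w\<in>{w\<in>D. L w = n}. x) Ds) end_series_one n (1::int)"
      by (rule series_expand[symmetric]) (use finDs in auto)
    also have "(\<lambda>D n x. \<Sum>w\<in>{w\<in>D. L w = n}. x) = (\<lambda>D n x. fps_nth (poincare_series G S D) n * (x::int))"
      by (simp add: ps)
    also have "foldr end_series_mult (map (\<lambda>D n x. fps_nth (poincare_series G S D) n * (x::int)) Ds) end_series_one n 1
        = fps_nth (prod_list (map (poincare_series G S) Ds)) n * 1"
      by (rule fps_expand[symmetric])
    also have "\<dots> = int (card {w\<in>C. L w = n})" using assms(5) by (simp add: ps C_def)
    finally show ?thesis by simp
  qed
  have eqsets: "{t\<in>A. F t = n} = {t\<in>A. g t = n}" for n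
  proof (induction n rule: less_induct)
    case (less n)
    have sub: "{t\<in>A. F t = n} \<subseteq> {t\<in>A. g t = n}"
    proof
      fix t assume t: "t \<in> {t\<in>A. F t = n}"
      then have "g t \<le> n" using gF by auto
      moreover have "\<not> g t < n"
      proof
        assume "g t < n"
        then have e: "{s\<in>A. F s = g t} = {s\<in>A. g s = g t}" using less.IH by blast
        have "t \<in> {s\<in>A. g s = g t}" using t by simp
        then have "F t = g t" using e by blast
        then show False using t \<open>g t < n\<close> by simp
      qed
      ultimately show "t \<in> {t\<in>A. g t = n}" using t by auto
    qed
    show ?case using card_subset_eq[OF fing sub] cardF cardg by simp
  qed
  have gFeq: "g t = F t" if "t \<in> A" for t
    using eqsets[of "F t"] that by auto
  have addit: "\<forall>D\<in>set Ds. \<forall>w\<in>D. \<forall>x y. \<rho> w (x+y) = \<rho> w x + \<rho> w y"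
  proof (intro ballI allI)
    fix D w x y assume "D \<in> set Ds" "w \<in> D"
    then have "w \<in> carrier G" using assms(3) by auto
    then have "Vector_Spaces.linear scale scale (\<rho> w)" using assms(6) by (simp add: hecke_rep_def)
    then show "\<rho> w (x+y) = \<rho> w x + \<rho> w y" by (simp add: Vector_Spaces.linear_iff)
  qed
  show ?thesis
  proof (intro ext)
    fix n x
    have "twisted_poincare G S \<rho> (carrier G) n x = (\<Sum>w\<in>{w\<in>C. L w = n}. \<rho> w x)"
      by (simp add: twisted_poincare_def C_def L_def)
    also have "\<dots> = (\<Sum>t\<in>{t\<in>A. g t = n}. \<rho> (word_prod G t) x)"
    proof (rule sum.reindex_bij_betw[symmetric])
      show "bij_betw (word_prod G) {t\<in>A. g t = n} {w\<in>C. L w = n}"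
        using imgg inj by (simp add: bij_betw_def inj_on_def)
    qed
    also have "\<dots> = (\<Sum>t\<in>{t\<in>A. F t = n}. foldr \<rho> t x)"
    proof (rule sum.cong)
      show "{t\<in>A. g t = n} = {t\<in>A. F t = n}" using eqsets by simp
    next
      fix t assume "t \<in> {t\<in>A. F t = n}"
      then have "t \<in> A" by simp
      then show "\<rho> (word_prod G t) x = foldr \<rho> t x"
        using rho_prod[OF cox assms(6), of t] Asub gFeq
        by (simp add: C_def g_def F_def L_def)
    qed
    also have "\<dots> = foldr end_series_mult (map (\<lambda>D n x. \<Sum>w\<in>{w\<in>D. L w = n}. \<rho> w x) Ds) end_series_one n x"
      unfolding A_def F_def by (rule series_expand[symmetric]) (use addit finDs in auto)
    also have "(\<lambda>D n x. \<Sum>w\<in>{w\<in>D. L w = n}. \<rho> w x) = twisted_poincare G S \<rho>"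
      by (simp add: twisted_poincare_def L_def fun_eq_iff)
    finally show "twisted_poincare G S \<rho> (carrier G) n x =
         foldr end_series_mult (map (twisted_poincare G S \<rho>) Ds) end_series_one n x" .
  qed
qed

end
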